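(* Let $N \ge 1$ and let $W_N$ be the set of binary words of length $N$. Define $\varphi_6 : W_N \to W_N$ by $\varphi_6(u) = v\, 01011\, 0^p v'$ if $u = v 0^p 10110 v'$ where $p \geq 2$, $v'$ is a (possibly empty) word, and $v$ is a (possibly empty) word which is either empty or ends with the letter $1$ and such that $v 0^p$ does not contain $0010110$ as a contiguous subword; and $\varphi_6(u) = u$ otherwise. Then $|P(\varphi_6(u))| \leq |P(u)|$ for every $u \in W_N$.
   Context: For a binary word $x$, $x^j$ denotes $j$ concatenated copies of $x$, and juxtaposition denotes concatenation. For a binary word $w = w_1 \cdots w_\ell$ of length $\ell$, $P(w)$ is the set of indices $i \geq 2$ such that at least one of the following holds: (i) $\ell \geq i$ and $w_{i-1} w_i = 00$; (ii) $\ell \geq i+2$ and $w_{i-1} w_i w_{i+1} w_{i+2} = 0100$; (iii) $\ell \geq i+3$ and $w_{i-1} \cdots w_{i+3} = 01010$. *)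

theory Defs
  imports Main "HOL-Library.Sublist"
begin

text \<open>Binary words are lists of naturals over the alphabet {0,1}; positions are 1-based
  in the paper, so the letter w_j is  w ! (j - 1).\<close>

definition W :: "nat \<Rightarrow> nat list set" where
  "W N = {w. length w = N \<and> set w \<subseteq> {0, 1}}"

definition P :: "nat list \<Rightarrow> nat set" where
  "P w = {i. 2 \<le> i \<and>
      ((length w \<ge> i \<and> w ! (i - 2) = 0 \<and> w ! (i - 1) = 0)
     \<or> (length w \<ge> i + 2 \<and> take 4 (drop (i - 2) w) = [0, 1, 0, 0])
     \<or> (length w \<ge> i + 3 \<and> take 5 (drop (i - 2) w) = [0, 1, 0, 1, 0]))}"

definition phi6_dec :: "nat list \<Rightarrow> nat list \<Rightarrow> nat \<Rightarrow> nat list \<Rightarrow> bool" where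
  "phi6_dec u v p v' \<longleftrightarrow>
     u = v @ replicate p 0 @ [1, 0, 1, 1, 0] @ v' \<and> p \<ge> 2 \<and>
     (v = [] \<or> last v = 1) \<and>
     \<not> sublist [0, 0, 1, 0, 1, 1, 0] (v @ replicate p 0)"

definition phi6 :: "nat list \<Rightarrow> nat list" where
  "phi6 u = (if \<exists>v p v'. phi6_dec u v p v'
     then (let (v, p, v') = (SOME (v, p, v'). phi6_dec u v p v')
           in v @ [0, 1, 0, 1, 1] @ replicate p 0 @ v')
     else u)"

end

theory Submission
  imports Defs
begin

definition starts :: "nat list \<Rightarrow> bool" where
  "starts w \<longleftrightarrow> take 2 w = [0,0] \<or> take 4 w = [0,1,0,0] \<or> take 5 w = [0,1,0,1,0]"

fun cnt :: "nat list \<Rightarrow> nat" where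
  "cnt [] = 0"
| "cnt (x # xs) = (if starts (x # xs) then 1 else 0) + cnt xs"

lemma drop2: "j + 2 \<le> length w \<Longrightarrow> drop j w = w!j # w!(Suc j) # drop (Suc (Suc j)) w"
  by (simp add: Cons_nth_drop_Suc)

lemma P_eq: "P w = (\<lambda>j. j + 2) ` {j. j < length w \<and> starts (drop j w)}"
proof (rule set_eqI)
  fix i
  show "i \<in> P w \<longleftrightarrow> i \<in> (\<lambda>j. j + 2) ` {j. j < length w \<and> starts (drop j w)}"
  proof
    assume "i \<in> P w"
    then have i2: "2 \<le> i" and c: "(length w \<ge> i \<and> w ! (i - 2) = 0 \<and> w ! (i - 1) = 0)
     \<or> (length w \<ge> i + 2 \<and> take 4 (drop (i - 2) w) = [0, 1, 0, 0])
     \<or> (length w \<ge> i + 3 \<and> take 5 (drop (i - 2) w) = [0, 1, 0, 1, 0])"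
      unfolding P_def by blast+
    obtain j where j: "i = j + 2" using i2 by (metis add.commute le_Suc_ex)
    have "j < length w \<and> starts (drop j w)"
      using c
    proof (elim disjE conjE)
      assume l: "i \<le> length w" and a: "w ! (i - 2) = 0" and b: "w ! (i - 1) = 0"
      have "drop j w = w!j # w!(Suc j) # drop (Suc (Suc j)) w" using l j by (intro drop2) simp
      moreover have "w!j = 0" "w!(Suc j) = 0" using a b j by simp_all
      ultimately show ?thesis using l j unfolding starts_def by simp
    next
      assume "i + 2 \<le> length w" "take 4 (drop (i - 2) w) = [0, 1, 0, 0]"
      then show ?thesis using j unfolding starts_def by simp
    next
      assume "i + 3 \<le> length w" "take 5 (drop (i - 2) w) = [0, 1, 0, 1, 0]"
      then show ?thesis using j unfolding starts_def by simp
    qed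
    then show "i \<in> (\<lambda>j. j + 2) ` {j. j < length w \<and> starts (drop j w)}" using j by blast
  next
    assume "i \<in> (\<lambda>j. j + 2) ` {j. j < length w \<and> starts (drop j w)}"
    then obtain j where j: "i = j + 2" and jl: "j < length w" and s: "starts (drop j w)" by blast
    have len: "length (take k (drop j w)) = k \<Longrightarrow> length w \<ge> j + k" for k using jl by (simp add: min_def split: if_splits)
    from s consider (a) "take 2 (drop j w) = [0,0]" | (b) "take 4 (drop j w) = [0,1,0,0]"
      | (c) "take 5 (drop j w) = [0,1,0,1,0]" unfolding starts_def by blast
    then show "i \<in> P w"
    proof cases
      case a
      then have l: "length w \<ge> j + 2" using len[of 2] by simp
      then have "drop j w = w!j # w!(Suc j) # drop (Suc (Suc j)) w" by (rule drop2)
      then have "w ! j = 0 \<and> w ! (Suc j) = 0" using a by simp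
      then have "w ! (i-2) = 0 \<and> w ! (i-1) = 0" using j by simp
      then show ?thesis unfolding P_def using l j by simp
    next
      case b
      then have "length w \<ge> j + 4" using len[of 4] by simp
      then show ?thesis unfolding P_def using b j by simp
    next
      case c
      then have "length w \<ge> j + 5" using len[of 5] by simp
      then show ?thesis unfolding P_def using c j by simp
    qed
  qed
qed

lemma card_P: "card (P w) = card {j. j < length w \<and> starts (drop j w)}"
  unfolding P_eq by (rule card_image) (auto simp: inj_on_def)

lemma set_cons: "{j. j < length (x#xs) \<and> starts (drop j (x#xs))} =
   (if starts (x#xs) then {0} else {}) \<union> Suc ` {j. j < length xs \<and> starts (drop j xs)}"
  apply (auto simp: image_iff)
  apply (case_tac xa; auto)+
  done

lemma cnt_card: "cnt w = card {j. j < length w \<and> starts (drop j w)}"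
proof (induction w)
  case Nil then show ?case by simp
next
  case (Cons x xs)
  have fin: "finite (Suc ` {j. j < length xs \<and> starts (drop j xs)})" by simp
  have "card (Suc ` {j. j < length xs \<and> starts (drop j xs)}) = cnt xs"
    using Cons by (simp add: card_image)
  then show ?case unfolding set_cons using fin by (auto simp: card_insert_if)
qed

lemma cnt_app: "(\<forall>j < length v. starts (drop j v @ w1) = starts (drop j v @ w2)) \<Longrightarrow>
   cnt w1 = cnt w2 \<Longrightarrow> cnt (v @ w1) = cnt (v @ w2)"
proof (induction v)
  case Nil then show ?case by simp
next
  case (Cons x v)
  have h0: "starts ((x#v) @ w1) = starts ((x#v) @ w2)" using Cons.prems(1)[rule_format, of 0] by simp
  have "\<forall>j < length v. starts (drop j v @ w1) = starts (drop j v @ w2)"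
    using Cons.prems(1) by (metis Suc_less_eq drop_Suc_Cons length_Cons)
  then have "cnt (v @ w1) = cnt (v @ w2)" using Cons by blast
  then show ?case using h0 by simp
qed

lemma starts_suffix:
  assumes "s \<noteq> []" "last s = 1" "p \<ge> 2"
  shows "starts (s @ replicate p 0 @ [1,0,1,1,0] @ v') = starts (s @ [0,1,0,1,1] @ replicate p 0 @ v')"
proof -
  obtain q where q: "p = Suc (Suc q)" using assms(3) by (metis add_2_eq_Suc le_Suc_ex)
  show ?thesis
  proof (cases s)
    case Nil then show ?thesis using assms by simp
  next
    case (Cons a t) note s1 = this
    show ?thesis
    proof (cases t)
      case Nil then show ?thesis using assms s1 q by (simp add: starts_def)
    next
      case (Cons b t2) note s2 = this
      show ?thesis
      proof (cases t2)
        case Nil then show ?thesis using assms s1 s2 q by (simp add: starts_def)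
      next
        case (Cons c t3) note s3 = this
        show ?thesis
        proof (cases t3)
          case Nil then show ?thesis using assms s1 s2 s3 q by (simp add: starts_def)
        next
          case (Cons d t4) note s4 = this
          show ?thesis
          proof (cases t4)
            case Nil then show ?thesis using assms s1 s2 s3 s4 q by (simp add: starts_def)
          next
            case (Cons e t5) then show ?thesis using s1 s2 s3 s4 by (simp add: starts_def)
          qed
        qed
      qed
    qed
  qed
qed

lemma cnt_zeros: "cnt (replicate n 0 @ 0 # R) = n + cnt (0 # R)"
proof (induction n)
  case 0 then show ?case by simp
next
  case (Suc n)
  have "replicate n 0 @ 0 # R = 0 # (replicate n 0 @ R)" by (induction n) auto
  have "starts (0 # 0 # X)" for X by (simp add: starts_def)
  then have "starts (0 # replicate n 0 @ 0 # R)" unfolding \<open>replicate n 0 @ 0 # R = _\<close> by blast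
  then have "cnt (0 # replicate n 0 @ 0 # R) = 1 + cnt (replicate n 0 @ 0 # R)" by (simp only: cnt.simps if_True)
  then show ?case using Suc by simp
qed

lemma cnt_mid: assumes "p \<ge> 2"
  shows "cnt (replicate p 0 @ [1,0,1,1,0] @ v') = cnt ([0,1,0,1,1] @ replicate p 0 @ v')"
proof -
  obtain q where q: "p = Suc q" using assms by (cases p) auto
  have r: "replicate p 0 @ X = replicate q 0 @ 0 # X" for X :: "nat list"
    unfolding q by (simp add: replicate_app_Cons_same)
  have "cnt (replicate p 0 @ [1,0,1,1,0] @ v') = q + cnt (0 # [1,0,1,1,0] @ v')"
    unfolding r by (rule cnt_zeros)
  also have "\<dots> = q + cnt (0 # v')" by (simp add: starts_def)
  also have "\<dots> = cnt (replicate p 0 @ v')" unfolding r by (simp add: cnt_zeros)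
  also have "\<dots> = cnt ([0,1,0,1,1] @ replicate p 0 @ v')"
  proof -
    have "q \<ge> 1" using assms q by simp
    then obtain k where "q = Suc k" by (cases q) auto
    then show ?thesis using q by (simp add: starts_def)
  qed
  finally show ?thesis .
qed

theorem lemma4p6:
  fixes N :: nat and u :: "nat list"
  assumes "N \<ge> 1" and "u \<in> W N"
  shows "card (P (phi6 u)) \<le> card (P u)"
proof (cases "\<exists>v p v'. phi6_dec u v p v'")
  case False
  then have "phi6 u = u" unfolding phi6_def by auto
  then show ?thesis by simp
next
  case True
  obtain v p v' where ch: "(SOME (v, p, v'). phi6_dec u v p v') = (v, p, v')" by (metis prod_cases3)
  have d: "phi6_dec u v p v'"
  proof -
    from True obtain a b c where "phi6_dec u a b c" by blast
    then have "(\<lambda>(v, p, v'). phi6_dec u v p v') (a, b, c)" by simp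
    then have "(\<lambda>(v, p, v'). phi6_dec u v p v') (SOME x. (\<lambda>(v, p, v'). phi6_dec u v p v') x)"
      by (rule someI)
    then show ?thesis using ch by simp
  qed
  have ph: "phi6 u = v @ [0, 1, 0, 1, 1] @ replicate p 0 @ v'"
    unfolding phi6_def using True ch by simp
  from d have u: "u = v @ replicate p 0 @ [1, 0, 1, 1, 0] @ v'" and p: "p \<ge> 2"
    and lv: "v = [] \<or> last v = 1" unfolding phi6_dec_def by auto
  have "\<forall>j < length v. starts (drop j v @ replicate p 0 @ [1, 0, 1, 1, 0] @ v') =
      starts (drop j v @ [0, 1, 0, 1, 1] @ replicate p 0 @ v')"
  proof (intro allI impI)
    fix j assume j: "j < length v"
    then have ne: "drop j v \<noteq> []" by simp
    have "v \<noteq> []" using j by auto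
    then have "last v = 1" using lv by simp
    then have ld: "last (drop j v) = 1" using j by (simp add: last_drop)
    show "starts (drop j v @ replicate p 0 @ [1, 0, 1, 1, 0] @ v') =
      starts (drop j v @ [0, 1, 0, 1, 1] @ replicate p 0 @ v')" by (rule starts_suffix[OF ne ld p])
  qed
  then have "cnt (v @ replicate p 0 @ [1, 0, 1, 1, 0] @ v') = cnt (v @ [0, 1, 0, 1, 1] @ replicate p 0 @ v')"
    by (rule cnt_app[OF _ cnt_mid[OF p]])
  then have "cnt u = cnt (phi6 u)" unfolding ph by (subst u) assumption
  then show ?thesis by (simp add: card_P cnt_card)
qed

end
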